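(* Let $\mathcal{C}=\mathsf{CSS}(A,B)$ and let $U$ be a 1-local Clifford circuit. If $U$ is a logical operator on $\mathcal{C}$, then it is equivalent to some depth-1 circuit $V$ with gates from $\{I,P,HP,PH,PHP,H\}$ such that for all $a\in A$ and all $b\in B$: $a\cap V_{P,HP,PH,H}\in B$, $a\cap V_{PH,H}\in A$, $b\cap V_{HP,PHP,PH,H}\in A$, and $b\cap V_{HP,H}\in B$.
   Context: $\mathsf{CSS}(A,B)$ is the CSS code on $n$ qubits built from classical codes $A,B\subseteq\mathbb{F}_2^n$ with $B\subseteq A^\perp$, whose stabilizer group is generated by the $X$-stabilizers $X^a$ ($a\in A$) and the $Z$-stabilizers $Z^b$ ($b\in B$); here for $a\in\mathbb{F}_2^n$ and a single-qubit gate $G$, $G^a=\bigotimes_{i:a_i=1}G_i$. A logical operator is any operator preserving the codespace. A 1-local Clifford circuit is a tensor product of single-qubit Clifford gates. "Equivalent" means: every 1-local Clifford circuit $U$ can be written as $U=VQ$ where $Q$ is a Pauli circuit and $V$ is a depth-1 circuit with each single-qubit gate in $\{I,P,HP,PHP,PH,H\}$ ($P$ the phase gate, $H$ the Hadamard); $U$ is a logical operator with logical action $\bar U$ iff $V$ is (up to phase) a logical operator with the same action up to phase. For a set $K$ of these single-qubit gates, $V_K=\{i : V_i\in K\}$ (the set of physical qubits on which $V$ applies a gate from $K$). For $a\in\mathbb{F}_2^n$ and $h\subseteq\{1,\dots,n\}$, $a\cap h$ denotes the vector with $(a\cap h)_i=1$ iff $a_i=1$ and $i\in h$. Up to phase,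 the gates act by conjugation as: $I: X\mapsto X, Z\mapsto Z$; $P: X\mapsto XZ, Z\mapsto Z$; $HP: X\mapsto XZ, Z\mapsto X$; $PH: X\mapsto Z, Z\mapsto XZ$; $PHP: X\mapsto X, Z\mapsto XZ$; $H: X\mapsto Z, Z\mapsto X$. *)

theory Defs
  imports Complex_Main
begin

text \<open>Qubits are indexed by a finite type 'n (so n = CARD('n)).
  Computational basis states of n qubits are bit strings 'n => bool;
  an n-qubit operator is a complex matrix indexed by bit strings
  (row, column). A single-qubit operator is a 2x2 complex matrix
  indexed by bool (False = |0>, True = |1>).\<close>

type_synonym gate1 = "bool \<Rightarrow> bool \<Rightarrow> complex"
type_synonym 'n qop = "('n \<Rightarrow> bool) \<Rightarrow> ('n \<Rightarrow> bool) \<Rightarrow> complex"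
type_synonym 'n qstate = "('n \<Rightarrow> bool) \<Rightarrow> complex"

definition gmult :: "gate1 \<Rightarrow> gate1 \<Rightarrow> gate1" where
  "gmult g h = (\<lambda>r c. \<Sum>k\<in>UNIV. g r k * h k c)"

definition gadj :: "gate1 \<Rightarrow> gate1" where
  "gadj g = (\<lambda>r c. cnj (g c r))"

definition gscale :: "complex \<Rightarrow> gate1 \<Rightarrow> gate1" where
  "gscale s g = (\<lambda>r c. s * g r c)"

definition pI :: gate1 where "pI = (\<lambda>r c. if r = c then 1 else 0)"
definition pX :: gate1 where "pX = (\<lambda>r c. if r \<noteq> c then 1 else 0)"
definition pY :: gate1 where
  "pY = (\<lambda>r c. if r = c then 0 else if r then \<i> else - \<i>)"
definition pZ :: gate1 where
  "pZ = (\<lambda>r c. if r = c then (if r then -1 else 1) else 0)"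

definition gP :: gate1 where
  "gP = (\<lambda>r c. if r = c then (if r then \<i> else 1) else 0)"
definition gH :: gate1 where
  "gH = (\<lambda>r c. complex_of_real (1 / sqrt 2) * (if r \<and> c then -1 else 1))"

definition unitary1 :: "gate1 \<Rightarrow> bool" where
  "unitary1 g \<longleftrightarrow> gmult g (gadj g) = pI \<and> gmult (gadj g) g = pI"

definition pauli_up_to_phase :: "gate1 \<Rightarrow> bool" where
  "pauli_up_to_phase M \<longleftrightarrow> (\<exists>s p. s \<noteq> 0 \<and> p \<in> {pI, pX, pY, pZ} \<and> M = gscale s p)"

definition clifford1 :: "gate1 \<Rightarrow> bool" where
  "clifford1 g \<longleftrightarrow> unitary1 g
     \<and> pauli_up_to_phase (gmult (gmult g pX) (gadj g))
     \<and> pauli_up_to_phase (gmult (gmult g pZ) (gadj g))"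

definition tensor :: "('n::finite \<Rightarrow> gate1) \<Rightarrow> 'n qop" where
  "tensor g = (\<lambda>x y. \<Prod>i\<in>UNIV. g i (x i) (y i))"

definition opmult :: "'n::finite qop \<Rightarrow> 'n qop \<Rightarrow> 'n qop" where
  "opmult M N = (\<lambda>x y. \<Sum>z\<in>UNIV. M x z * N z y)"

definition apply_op :: "'n::finite qop \<Rightarrow> 'n qstate \<Rightarrow> 'n qstate" where
  "apply_op M \<psi> = (\<lambda>x. \<Sum>y\<in>UNIV. M x y * \<psi> y)"

definition one_local_clifford :: "'n::finite qop \<Rightarrow> bool" where
  "one_local_clifford U \<longleftrightarrow> (\<exists>g. (\<forall>i. clifford1 (g i)) \<and> U = tensor g)"

definition pauli_circuit :: "'n::finite qop \<Rightarrow> bool" where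
  "pauli_circuit Q \<longleftrightarrow> (\<exists>p. (\<forall>i. p i \<in> {pI, pX, pY, pZ}) \<and> Q = tensor p)"

definition pow_gate :: "gate1 \<Rightarrow> ('n::finite \<Rightarrow> bool) \<Rightarrow> 'n qop" where
  "pow_gate G a = tensor (\<lambda>i. if a i then G else pI)"

text \<open>Classical binary linear codes in F_2^n (vectors are 'n => bool, addition is xor).\<close>
definition lin_code :: "('n \<Rightarrow> bool) set \<Rightarrow> bool" where
  "lin_code A \<longleftrightarrow> (\<lambda>_. False) \<in> A \<and> (\<forall>a\<in>A. \<forall>b\<in>A. (\<lambda>i. a i \<noteq> b i) \<in> A)"

definition dual_code :: "('n::finite \<Rightarrow> bool) set \<Rightarrow> ('n \<Rightarrow> bool) set" where
  "dual_code A = {b. \<forall>a\<in>A. even (card {i. a i \<and> b i})}"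

definition css_codespace :: "('n::finite \<Rightarrow> bool) set \<Rightarrow> ('n \<Rightarrow> bool) set \<Rightarrow> 'n qstate set" where
  "css_codespace A B = {\<psi>. (\<forall>a\<in>A. apply_op (pow_gate pX a) \<psi> = \<psi>)
                        \<and> (\<forall>b\<in>B. apply_op (pow_gate pZ b) \<psi> = \<psi>)}"

definition logical_op :: "'n::finite qstate set \<Rightarrow> 'n qop \<Rightarrow> bool" where
  "logical_op C U \<longleftrightarrow> (\<forall>\<psi>\<in>C. apply_op U \<psi> \<in> C)"

datatype gate = GI | GP | GHP | GPHP | GPH | GH

fun gate_mat :: "gate \<Rightarrow> gate1" where
  "gate_mat GI = pI"
| "gate_mat GP = gP"
| "gate_mat GHP = gmult gH gP"
| "gate_mat GPHP = gmult gP (gmult gH gP)"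
| "gate_mat GPH = gmult gP gH"
| "gate_mat GH = gH"

definition gate_circuit :: "('n::finite \<Rightarrow> gate) \<Rightarrow> 'n qop" where
  "gate_circuit V = tensor (\<lambda>i. gate_mat (V i))"

definition Vset :: "('n \<Rightarrow> gate) \<Rightarrow> gate set \<Rightarrow> 'n set" where
  "Vset V K = {i. V i \<in> K}"

definition cap :: "('n \<Rightarrow> bool) \<Rightarrow> 'n set \<Rightarrow> ('n \<Rightarrow> bool)" where
  "cap a h = (\<lambda>i. a i \<and> i \<in> h)"

end

theory Submission
  imports Defs "HOL-Library.FuncSet"
begin


definition mk :: "complex \<Rightarrow> complex \<Rightarrow> complex \<Rightarrow> complex \<Rightarrow> gate1" where
  "mk a b c d = (\<lambda>r s. if r then (if s then d else c) else (if s then b else a))"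

lemma mk_eta: "g = mk (g False False) (g False True) (g True False) (g True True)"
  unfolding mk_def by (simp add: fun_eq_iff)
lemma mk_app[simp]: "mk a b c d False False = a" "mk a b c d False True = b" "mk a b c d True False = c" "mk a b c d True True = d"
  by (simp_all add: mk_def)

lemma mk_eq[simp]: "mk a b c d = mk a' b' c' d' \<longleftrightarrow> a = a' \<and> b = b' \<and> c = c' \<and> d = d'"
  unfolding mk_def by (auto simp: fun_eq_iff)

lemma UNIV_bool_sum: "(\<Sum>k\<in>(UNIV::bool set). f k) = f False + f True"
  by (simp add: UNIV_bool)

lemma gmult_mk[simp]: "gmult (mk a b c d) (mk a' b' c' d') =
   mk (a*a' + b*c') (a*b' + b*d') (c*a' + d*c') (c*b' + d*d')"
  unfolding gmult_def mk_def by (intro ext) (auto simp: UNIV_bool_sum)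

lemma gadj_mk[simp]: "gadj (mk a b c d) = mk (cnj a) (cnj c) (cnj b) (cnj d)"
  unfolding gadj_def mk_def by (intro ext) auto

lemma gscale_mk[simp]: "gscale s (mk a b c d) = mk (s*a) (s*b) (s*c) (s*d)"
  unfolding gscale_def mk_def by (intro ext) auto

lemma pI_mk: "pI = mk 1 0 0 1" unfolding pI_def mk_def by (intro ext) auto
lemma pX_mk: "pX = mk 0 1 1 0" unfolding pX_def mk_def by (intro ext) auto
lemma pY_mk: "pY = mk 0 (-\<i>) \<i> 0" unfolding pY_def mk_def by (intro ext) auto
lemma pZ_mk: "pZ = mk 1 0 0 (-1)" unfolding pZ_def mk_def by (intro ext) auto
lemma gP_mk: "gP = mk 1 0 0 \<i>" unfolding gP_def mk_def by (intro ext) auto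
definition hh :: complex where "hh = complex_of_real (1 / sqrt 2)"
lemma gH_mk: "gH = mk hh hh hh (-hh)" unfolding gH_def mk_def hh_def by (intro ext) auto
lemma hh2: "hh * hh = 1/2"
  unfolding hh_def by (simp flip: of_real_mult) 

lemmas mats = pI_mk pX_mk pY_mk pZ_mk gP_mk gH_mk


lemma cnj_hh[simp]: "cnj hh = hh" unfolding hh_def by simp
lemma hh_nz[simp]: "hh \<noteq> 0" unfolding hh_def by simp

lemma gmult_assoc: "gmult (gmult f g) h = gmult f (gmult g h)"
  unfolding gmult_def by (simp add: UNIV_bool_sum algebra_simps)
lemma gmult_I_left[simp]: "gmult pI g = g"
  unfolding gmult_def pI_def by (simp add: UNIV_bool_sum fun_eq_iff)
lemma gmult_I_right[simp]: "gmult g pI = g"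
  unfolding gmult_def pI_def by (simp add: UNIV_bool_sum fun_eq_iff)
lemma gmult_scale_left: "gmult (gscale c f) g = gscale c (gmult f g)"
  unfolding gmult_def gscale_def by (simp add: UNIV_bool_sum algebra_simps)
lemma gmult_scale_right: "gmult f (gscale c g) = gscale c (gmult f g)"
  unfolding gmult_def gscale_def by (simp add: UNIV_bool_sum algebra_simps)
lemma gscale_gscale: "gscale c (gscale d g) = gscale (c*d) g"
  unfolding gscale_def by (simp add: algebra_simps)
lemma gscale_1[simp]: "gscale 1 g = g"
  unfolding gscale_def by simp

lemma pauli_char:
  assumes hx: "gmult h pX = gscale k (gmult pX h)" and hz: "gmult h pZ = gscale k' (gmult pZ h)"
  shows "\<exists>q c. q \<in> {pI, pX, pY, pZ} \<and> h = gscale c q"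
proof -
  obtain a b c d where h: "h = mk a b c d" using mk_eta by blast
  have "mk b a d c = gmult h pX" by (simp add: h mats)
  also have "\<dots> = gscale k (gmult pX h)" by (rule hx)
  also have "\<dots> = mk (k*c) (k*d) (k*a) (k*b)" by (simp add: h mats)
  finally have "b = k*c \<and> a = k*d \<and> d = k*a \<and> c = k*b" by (rule mk_eq[THEN iffD1])
  then have e1: "b = k*c" "a = k*d" "d = k*a" "c = k*b" by blast+
  have "mk a (-b) c (-d) = gmult h pZ" by (simp add: h mats)
  also have "\<dots> = gscale k' (gmult pZ h)" by (rule hz)
  also have "\<dots> = mk (k'*a) (k'*b) (-(k'*c)) (-(k'*d))" by (simp add: h mats)
  finally have "a = k'*a \<and> -b = k'*b \<and> c = -(k'*c) \<and> -d = -(k'*d)" by (rule mk_eq[THEN iffD1])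
  then have e2: "a = k'*a" "-b = k'*b" "c = -(k'*c)" "d = k'*d" by (blast, blast, blast, metis neg_equal_iff_equal)
  show ?thesis
  proof (cases "k' = 1")
    case True
    have "b = 0" using e2(2) unfolding True by (simp add: minus_equation_iff)
    have "c = 0" using e2(3) unfolding True by (simp add: equation_minus_iff)
    show ?thesis
    proof (cases "a = d")
      case True
      then have "h = gscale a pI" using \<open>b = 0\<close> \<open>c = 0\<close> by (simp add: h mats)
      then show ?thesis by blast
    next
      case False
      have "(1 + k) * (a - d) = 0"
      proof -
        have "(1 + k) * (a - d) = a - d + k * a - k * d" by (simp add: algebra_simps)
        also have "\<dots> = a - d + d - a" by (simp only: e1(3)[symmetric] e1(2)[symmetric])
        also have "\<dots> = 0" by simp
        finally show ?thesis .
      qed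
      then have "k = -1" using False by (simp add: add_eq_0_iff)
      then have "d = - a" using e1(3) by simp
      then have "h = gscale a pZ" using \<open>b = 0\<close> \<open>c = 0\<close> by (simp add: h mats)
      then show ?thesis by blast
    qed
  next
    case False
    have "(1 - k') * a = a - k' * a" by (simp add: algebra_simps)
    also have "\<dots> = 0" by (simp only: e2(1)[symmetric]) simp
    finally have "(1 - k') * a = 0" .
    then have "a = 0" using False by simp
    have "(1 - k') * d = d - k' * d" by (simp add: algebra_simps)
    also have "\<dots> = 0" by (simp only: e2(4)[symmetric]) simp
    finally have "(1 - k') * d = 0" .
    then have "d = 0" using False by simp
    show ?thesis
    proof (cases "b = c")
      case True
      then have "h = gscale b pX" using \<open>a = 0\<close> \<open>d = 0\<close> by (simp add: h mats)
      then show ?thesis by blast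
    next
      case False
      have "(1 + k) * (b - c) = 0"
      proof -
        have "(1 + k) * (b - c) = b - c + k * b - k * c" by (simp add: algebra_simps)
        also have "\<dots> = b - c + c - b" by (simp only: e1(1)[symmetric] e1(4)[symmetric])
        also have "\<dots> = 0" by simp
        finally show ?thesis .
      qed
      then have "k = -1" using False by (simp add: add_eq_0_iff)
      then have "c = - b" using e1(4) by simp
      then have "h = gscale (\<i>*b) pY" using \<open>a = 0\<close> \<open>d = 0\<close> by (simp add: h mats algebra_simps)
      then show ?thesis by blast
    qed
  qed
qed

lemma gadj_gscale: "gadj (gscale c g) = gscale (cnj c) (gadj g)"
  unfolding gadj_def gscale_def by simp
lemma gadj_gmult: "gadj (gmult f g) = gmult (gadj g) (gadj f)"
  unfolding gadj_def gmult_def by (simp add: UNIV_bool_sum algebra_simps)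

definition paulis :: "gate1 set" where "paulis = {pI, pX, pY, pZ}"

lemma gate_unit: "gmult (gadj (gate_mat v)) (gate_mat v) = pI"
  by (cases v) (simp_all add: mats algebra_simps hh2)
lemma gate_unit': "gmult (gate_mat v) (gadj (gate_mat v)) = pI"
  by (cases v) (simp_all add: mats algebra_simps hh2)
lemma pauli_unit: "q \<in> paulis \<Longrightarrow> gmult (gadj q) q = pI"
  unfolding paulis_def by (auto simp: mats)

lemma class_case:
  assumes U1: "gmult (gadj g) g = pI"
  and gx: "gmult g pX = gscale s (gmult p g)" and gz: "gmult g pZ = gscale s' (gmult p' g)"
  and tx: "gmult (gadj (gate_mat v)) p = gscale t (gmult pX (gadj (gate_mat v)))"
  and tz: "gmult (gadj (gate_mat v)) p' = gscale t' (gmult pZ (gadj (gate_mat v)))"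
  shows "\<exists>v q c. q \<in> paulis \<and> cmod c = 1 \<and> g = gscale c (gmult (gate_mat v) q)"
proof -
  define G where "G = gate_mat v"
  define h where "h = gmult (gadj G) g"
  have "gmult h pX = gmult (gadj G) (gmult g pX)" by (simp add: h_def gmult_assoc)
  also have "\<dots> = gscale s (gmult (gmult (gadj G) p) g)" by (simp add: gx gmult_scale_right gmult_assoc)
  also have "\<dots> = gscale (s*t) (gmult pX h)"
    by (simp add: tx G_def h_def gmult_scale_left gscale_gscale gmult_assoc)
  finally have hx: "gmult h pX = gscale (s*t) (gmult pX h)" .
  have "gmult h pZ = gmult (gadj G) (gmult g pZ)" by (simp add: h_def gmult_assoc)
  also have "\<dots> = gscale s' (gmult (gmult (gadj G) p') g)" by (simp add: gz gmult_scale_right gmult_assoc)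
  also have "\<dots> = gscale (s'*t') (gmult pZ h)"
    by (simp add: tz G_def h_def gmult_scale_left gscale_gscale gmult_assoc)
  finally have hz: "gmult h pZ = gscale (s'*t') (gmult pZ h)" .
  obtain q c where q: "q \<in> {pI, pX, pY, pZ}" and hq: "h = gscale c q"
    using pauli_char[OF hx hz] by blast
  have "gmult G h = g" unfolding h_def G_def by (simp add: gmult_assoc[symmetric] gate_unit')
  then have g: "g = gscale c (gmult G q)" by (simp add: hq gmult_scale_right)
  have "pI = gmult (gadj g) g" using U1 by simp
  also have "\<dots> = gscale (c * cnj c) (gmult (gadj q) (gmult (gmult (gadj G) G) q))"
    unfolding g by (simp add: gadj_gscale gadj_gmult gmult_scale_left gmult_scale_right gscale_gscale gmult_assoc)
  also have "\<dots> = gscale (c * cnj c) pI"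
    using q by (simp add: G_def gate_unit pauli_unit paulis_def)
  finally have "c * cnj c = 1" by (simp add: pI_mk)
  then have "cmod c = 1"
    by (metis complex_mod_mult_cnj complex_mod_cnj mult.commute norm_mult norm_one power2_eq_square real_sqrt_abs real_sqrt_one abs_norm_cancel)
  then show ?thesis using g q unfolding G_def paulis_def by blast
qed
lemma tab0: "gmult (gadj (gate_mat GI)) pX = gscale (1) (gmult pX (gadj (gate_mat GI)))"
   "gmult (gadj (gate_mat GI)) pZ = gscale (1) (gmult pZ (gadj (gate_mat GI)))"
  by (simp_all add: mats algebra_simps hh2)
lemma tab1: "gmult (gadj (gate_mat GP)) pY = gscale (1) (gmult pX (gadj (gate_mat GP)))"
   "gmult (gadj (gate_mat GP)) pZ = gscale (1) (gmult pZ (gadj (gate_mat GP)))"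
  by (simp_all add: mats algebra_simps hh2)
lemma tab2: "gmult (gadj (gate_mat GHP)) pY = gscale (-1) (gmult pX (gadj (gate_mat GHP)))"
   "gmult (gadj (gate_mat GHP)) pX = gscale (1) (gmult pZ (gadj (gate_mat GHP)))"
  by (simp_all add: mats algebra_simps hh2)
lemma tab3: "gmult (gadj (gate_mat GPH)) pZ = gscale (1) (gmult pX (gadj (gate_mat GPH)))"
   "gmult (gadj (gate_mat GPH)) pY = gscale (1) (gmult pZ (gadj (gate_mat GPH)))"
  by (simp_all add: mats algebra_simps hh2)
lemma tab4: "gmult (gadj (gate_mat GPHP)) pX = gscale (1) (gmult pX (gadj (gate_mat GPHP)))"
   "gmult (gadj (gate_mat GPHP)) pY = gscale (1) (gmult pZ (gadj (gate_mat GPHP)))"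
  by (simp_all add: mats algebra_simps hh2)
lemma tab5: "gmult (gadj (gate_mat GH)) pZ = gscale (1) (gmult pX (gadj (gate_mat GH)))"
   "gmult (gadj (gate_mat GH)) pX = gscale (1) (gmult pZ (gadj (gate_mat GH)))"
  by (simp_all add: mats algebra_simps hh2)

lemma paulis_distinct: "pI \<noteq> pX" "pI \<noteq> pY" "pI \<noteq> pZ" "pX \<noteq> pY" "pX \<noteq> pZ" "pY \<noteq> pZ"
  by (simp_all add: mats complex_eq_iff)

lemma classify:
  assumes "clifford1 g"
  shows "\<exists>v q c. q \<in> paulis \<and> cmod c = 1 \<and> g = gscale c (gmult (gate_mat v) q)"
proof -
  from assms have U0: "gmult g (gadj g) = pI" and U1: "gmult (gadj g) g = pI"
    and px: "pauli_up_to_phase (gmult (gmult g pX) (gadj g))"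
    and pz: "pauli_up_to_phase (gmult (gmult g pZ) (gadj g))"
    unfolding clifford1_def unitary1_def by auto
  obtain s p where s: "s \<noteq> 0" and p: "p \<in> {pI, pX, pY, pZ}" and sp: "gmult (gmult g pX) (gadj g) = gscale s p"
    using px unfolding pauli_up_to_phase_def by blast
  obtain s' p' where s': "s' \<noteq> 0" and p': "p' \<in> {pI, pX, pY, pZ}" and sp': "gmult (gmult g pZ) (gadj g) = gscale s' p'"
    using pz unfolding pauli_up_to_phase_def by blast
  have gx: "gmult g pX = gscale s (gmult p g)"
  proof -
    have "gmult g pX = gmult (gmult (gmult g pX) (gadj g)) g" by (simp add: gmult_assoc U1)
    then show ?thesis by (simp add: sp gmult_scale_left)
  qed
  have gz: "gmult g pZ = gscale s' (gmult p' g)"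
  proof -
    have "gmult g pZ = gmult (gmult (gmult g pZ) (gadj g)) g" by (simp add: gmult_assoc U1)
    then show ?thesis by (simp add: sp' gmult_scale_left)
  qed
  have cx: "pX = gscale s (gmult (gadj g) (gmult p g))"
  proof -
    have "pX = gmult (gadj g) (gmult g pX)" by (simp add: gmult_assoc[symmetric] U1)
    then show ?thesis by (simp add: gx gmult_scale_right)
  qed
  have cz: "pZ = gscale s' (gmult (gadj g) (gmult p' g))"
  proof -
    have "pZ = gmult (gadj g) (gmult g pZ)" by (simp add: gmult_assoc[symmetric] U1)
    then show ?thesis by (simp add: gz gmult_scale_right)
  qed
  have npI: "p \<noteq> pI"
  proof
    assume "p = pI"
    then have "pX = gscale s pI" using cx U1 by simp
    then show False by (simp add: mats)
  qed
  have npI': "p' \<noteq> pI"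
  proof
    assume "p' = pI"
    then have "pZ = gscale s' pI" using cz U1 by simp
    then show False by (auto simp: mats)
  qed
  have npp: "p \<noteq> p'"
  proof
    assume "p = p'"
    have "gscale s' pX = gscale s pZ" 
      using cx cz unfolding \<open>p = p'\<close> by (metis gscale_gscale mult.commute)
    then show False using s by (simp add: mats)
  qed
  have main: "\<exists>v q c. q \<in> paulis \<and> cmod c = 1 \<and> g = gscale c (gmult (gate_mat v) q)"
    if "gmult (gadj (gate_mat v)) p = gscale t (gmult pX (gadj (gate_mat v)))"
       "gmult (gadj (gate_mat v)) p' = gscale t' (gmult pZ (gadj (gate_mat v)))" for v t t'
    using class_case[OF U1 gx gz that] .
  have c0: ?thesis if "p = pX" "p' = pZ" using main[of GI "1" "1"] tab0 that by metis
  have c1: ?thesis if "p = pY" "p' = pZ" using main[of GP "1" "1"] tab1 that by metis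
  have c2: ?thesis if "p = pY" "p' = pX" using main[of GHP "-1" "1"] tab2 that by metis
  have c3: ?thesis if "p = pZ" "p' = pY" using main[of GPH "1" "1"] tab3 that by metis
  have c4: ?thesis if "p = pX" "p' = pY" using main[of GPHP "1" "1"] tab4 that by metis
  have c5: ?thesis if "p = pZ" "p' = pX" using main[of GH "1" "1"] tab5 that by metis
  have "(p = pX \<and> p' = pZ) \<or> (p = pY \<and> p' = pZ) \<or> (p = pY \<and> p' = pX) \<or> (p = pZ \<and> p' = pY) \<or> (p = pX \<and> p' = pY) \<or> (p = pZ \<and> p' = pX)"
    using p p' npI npI' npp by auto
  then show ?thesis using c0 c1 c2 c3 c4 c5 by blast
qed

fun gpow :: "gate1 \<Rightarrow> nat \<Rightarrow> gate1" where
  "gpow g 0 = pI" | "gpow g (Suc n) = gmult g (gpow g n)"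

lemma gpow_scale: "gpow (gscale c m) n = gscale (c^n) (gpow m n)"
  by (induction n) (simp_all add: gmult_scale_left gmult_scale_right gscale_gscale mult.commute)

definition Hs where "Hs = mk 1 1 1 (-1)"

fun G0 :: "gate \<Rightarrow> gate1" where
  "G0 GI = pI" | "G0 GP = gP" | "G0 GHP = gmult Hs gP" | "G0 GPHP = gmult gP (gmult Hs gP)"
| "G0 GPH = gmult gP Hs" | "G0 GH = Hs"

fun sig :: "gate \<Rightarrow> complex" where
  "sig GI = 1" | "sig GP = 1" | "sig GHP = hh" | "sig GPHP = hh" | "sig GPH = hh" | "sig GH = hh"

lemma sig_nz: "sig v \<noteq> 0" by (cases v) simp_all

lemma gate_G0: "gate_mat v = gscale (sig v) (G0 v)"
  by (cases v) (simp_all add: mats Hs_def algebra_simps)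

lemma order_base:
  assumes "q \<in> paulis"
  shows "gpow (gmult (G0 v) q) 12 False True = 0 \<and> gpow (gmult (G0 v) q) 12 True False = 0 \<and>
     gpow (gmult (G0 v) q) 12 False False = gpow (gmult (G0 v) q) 12 True True \<and>
     gpow (gmult (G0 v) q) 12 False False \<noteq> 0"
  using assms unfolding paulis_def
  by (cases v) (auto simp: mats Hs_def numeral_eq_Suc algebra_simps pI_mk)

lemma order12:
  assumes "c \<noteq> 0" "q \<in> paulis"
  shows "\<exists>s. s \<noteq> 0 \<and> gpow (gscale c (gmult (gate_mat v) q)) 12 = gscale s pI"
proof -
  define M where "M = gpow (gmult (G0 v) q) 12"
  have M: "M = gscale (M False False) pI"
    using order_base[OF assms(2), of v] unfolding M_def[symmetric]
    by (subst mk_eta) (simp add: pI_mk)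
  have "gpow (gscale c (gmult (gate_mat v) q)) 12 = gscale (c^12 * sig v ^ 12) M"
    by (simp add: gate_G0 gmult_scale_left gpow_scale gscale_gscale M_def power_mult_distrib)
  also have "\<dots> = gscale (c^12 * sig v ^ 12 * M False False) pI"
    by (subst M) (simp add: gscale_gscale)
  finally have e: "gpow (gscale c (gmult (gate_mat v) q)) 12 = gscale (c^12 * sig v ^ 12 * M False False) pI" .
  moreover have "M False False \<noteq> 0" using order_base[OF assms(2), of v] unfolding M_def by blast
  then have "c^12 * sig v ^ 12 * M False False \<noteq> 0" using assms(1) sig_nz[of v] by simp
  ultimately show ?thesis by blast
qed

definition xp :: "gate \<Rightarrow> bool" where "xp v \<longleftrightarrow> v \<in> {GI, GP, GHP, GPHP}"
definition zp :: "gate \<Rightarrow> bool" where "zp v \<longleftrightarrow> v \<in> {GP, GHP, GPH, GH}"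
definition xz :: "gate \<Rightarrow> bool" where "xz v \<longleftrightarrow> v \<in> {GHP, GPHP, GPH, GH}"
definition zz :: "gate \<Rightarrow> bool" where "zz v \<longleftrightarrow> v \<in> {GI, GP, GPH, GPHP}"
definition wgate :: "bool \<Rightarrow> bool \<Rightarrow> gate1" where
  "wgate x z = gmult (if x then pX else pI) (if z then pZ else pI)"

fun kx :: "gate \<Rightarrow> complex" where
  "kx GI = 1" | "kx GP = \<i>" | "kx GHP = -\<i>" | "kx GPHP = 1" | "kx GPH = 1" | "kx GH = 1"
fun kz :: "gate \<Rightarrow> complex" where
  "kz GI = 1" | "kz GP = 1" | "kz GHP = 1" | "kz GPHP = \<i>" | "kz GPH = \<i>" | "kz GH = 1"

lemma gateX: "gmult (gate_mat v) pX = gscale (kx v) (gmult (wgate (xp v) (zp v)) (gate_mat v))"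
  by (cases v) (simp_all add: mats algebra_simps hh2 wgate_def xp_def zp_def)
lemma gateZ: "gmult (gate_mat v) pZ = gscale (kz v) (gmult (wgate (xz v) (zz v)) (gate_mat v))"
  by (cases v) (simp_all add: mats algebra_simps hh2 wgate_def xz_def zz_def)

lemma pauliX: "q \<in> paulis \<Longrightarrow> \<exists>e. gmult q pX = gscale e (gmult pX q)"
  unfolding paulis_def
  apply (elim insertE emptyE)
  apply (rule exI[of _ 1]; simp add: mats)
  apply (rule exI[of _ 1]; simp add: mats)
  apply (rule exI[of _ "-1"]; simp add: mats)
  apply (rule exI[of _ "-1"]; simp add: mats)
  done
lemma pauliZ: "q \<in> paulis \<Longrightarrow> \<exists>e. gmult q pZ = gscale e (gmult pZ q)"
  unfolding paulis_def
  apply (elim insertE emptyE)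
  apply (rule exI[of _ 1]; simp add: mats)
  apply (rule exI[of _ "-1"]; simp add: mats)
  apply (rule exI[of _ "-1"]; simp add: mats)
  apply (rule exI[of _ "1"]; simp add: mats)
  done

lemma qubitX:
  assumes "g = gscale c (gmult (gate_mat v) q)" "q \<in> paulis"
  shows "\<exists>k. gmult g (if b then pX else pI) = gscale k (gmult (wgate (b \<and> xp v) (b \<and> zp v)) g)"
proof (cases b)
  case False
  then show ?thesis by (intro exI[of _ 1]) (simp add: wgate_def)
next
  case True
  obtain e where e: "gmult q pX = gscale e (gmult pX q)" using pauliX[OF assms(2)] by blast
  have "gmult g pX = gscale (e * kx v) (gmult (wgate (xp v) (zp v)) g)"
  proof -
    have "gmult g pX = gscale c (gmult (gate_mat v) (gmult q pX))"
      unfolding assms(1) by (simp add: gmult_assoc gmult_scale_left)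
    also have "\<dots> = gscale (c * e) (gmult (gmult (gate_mat v) pX) q)"
      by (simp add: e gmult_scale_right gscale_gscale gmult_assoc)
    also have "\<dots> = gscale (c * e * kx v) (gmult (wgate (xp v) (zp v)) (gmult (gate_mat v) q))"
      by (simp add: gateX gmult_scale_left gscale_gscale gmult_assoc)
    also have "\<dots> = gscale (e * kx v) (gmult (wgate (xp v) (zp v)) g)"
      unfolding assms(1) by (simp add: gmult_scale_right gscale_gscale algebra_simps)
    finally show ?thesis .
  qed
  then show ?thesis using True by auto
qed

lemma qubitZ:
  assumes "g = gscale c (gmult (gate_mat v) q)" "q \<in> paulis"
  shows "\<exists>k. gmult g (if b then pZ else pI) = gscale k (gmult (wgate (b \<and> xz v) (b \<and> zz v)) g)"
proof (cases b)
  case False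
  then show ?thesis by (intro exI[of _ 1]) (simp add: wgate_def)
next
  case True
  obtain e where e: "gmult q pZ = gscale e (gmult pZ q)" using pauliZ[OF assms(2)] by blast
  have "gmult g pZ = gscale (e * kz v) (gmult (wgate (xz v) (zz v)) g)"
  proof -
    have "gmult g pZ = gscale c (gmult (gate_mat v) (gmult q pZ))"
      unfolding assms(1) by (simp add: gmult_assoc gmult_scale_left)
    also have "\<dots> = gscale (c * e) (gmult (gmult (gate_mat v) pZ) q)"
      by (simp add: e gmult_scale_right gscale_gscale gmult_assoc)
    also have "\<dots> = gscale (c * e * kz v) (gmult (wgate (xz v) (zz v)) (gmult (gate_mat v) q))"
      by (simp add: gateZ gmult_scale_left gscale_gscale gmult_assoc)
    also have "\<dots> = gscale (e * kz v) (gmult (wgate (xz v) (zz v)) g)"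
      unfolding assms(1) by (simp add: gmult_scale_right gscale_gscale algebra_simps)
    finally show ?thesis .
  qed
  then show ?thesis using True by auto
qed


definition vadd :: "('n \<Rightarrow> bool) \<Rightarrow> ('n \<Rightarrow> bool) \<Rightarrow> ('n \<Rightarrow> bool)" where
  "vadd x y = (\<lambda>i. x i \<noteq> y i)"

definition chi :: "('n::finite \<Rightarrow> bool) \<Rightarrow> ('n \<Rightarrow> bool) \<Rightarrow> complex" where
  "chi u w = (\<Prod>i\<in>UNIV. if u i \<and> w i then -1 else 1)"

lemma sum_delta1: "(\<Sum>y\<in>(UNIV::'a::finite set). (if y = k then c else 0) * f y) = c * (f k::complex)"
proof -
  have "(\<Sum>y\<in>(UNIV::'a set). (if y = k then c else 0) * f y) = (\<Sum>y\<in>UNIV. if y = k then c * f y else 0)"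
    by (rule sum.cong) auto
  then show ?thesis by simp
qed

lemma tensor_mult:
  fixes f g :: "'n::finite \<Rightarrow> gate1"
  shows "opmult (tensor f) (tensor g) = tensor (\<lambda>i. gmult (f i) (g i))"
proof (intro ext)
  fix x y :: "'n::finite \<Rightarrow> bool"
  have "opmult (tensor f) (tensor g) x y = (\<Sum>z\<in>UNIV. \<Prod>i\<in>UNIV. f i (x i) (z i) * g i (z i) (y i))"
    unfolding opmult_def tensor_def by (simp add: prod.distrib)
  also have "\<dots> = (\<Prod>i\<in>UNIV. \<Sum>k\<in>UNIV. f i (x i) k * g i k (y i))"
    using prod_sum_PiE[of "UNIV::'n set" "\<lambda>_. UNIV::bool set" "\<lambda>i k. f i (x i) k * g i k (y i)"]
    by simp
  also have "\<dots> = tensor (\<lambda>i. gmult (f i) (g i)) x y"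
    unfolding tensor_def gmult_def by simp
  finally show "opmult (tensor f) (tensor g) x y = tensor (\<lambda>i. gmult (f i) (g i)) x y" .
qed

lemma tensor_scale: "tensor (\<lambda>i. gscale (c i) (f i)) = (\<lambda>x y. (\<Prod>i\<in>UNIV. c i) * tensor f x y)"
  unfolding tensor_def gscale_def by (simp add: prod.distrib)

lemma apply_op_mult: "apply_op (opmult M N) \<psi> = apply_op M (apply_op N \<psi>)"
  unfolding apply_op_def opmult_def sum_distrib_left sum_distrib_right
  by (rule ext, subst sum.swap) (simp add: mult.assoc)

lemma apply_op_scale: "apply_op (\<lambda>x y. c * M x y) \<psi> = (\<lambda>x. c * apply_op M \<psi> x)"
  unfolding apply_op_def by (simp add: sum_distrib_left algebra_simps)

lemma prod_if0: "(\<Prod>i\<in>(UNIV::'n::finite set). if P i then f i else 0) = (if \<forall>i. P i then (\<Prod>i\<in>UNIV. f i) else (0::complex))"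
proof (cases "\<forall>i. P i")
  case True then show ?thesis by simp
next
  case False
  then obtain j where "\<not> P j" by blast
  then show ?thesis using False by (intro trans[OF prod_zero]) auto
qed

lemma tensor_id: "tensor (\<lambda>_. pI) = (\<lambda>(x::'n::finite\<Rightarrow>bool) y. if x = y then 1 else 0)"
proof (intro ext)
  fix x y :: "'n \<Rightarrow> bool"
  have "tensor (\<lambda>_. pI) x y = (\<Prod>i\<in>UNIV. if x i = y i then 1 else 0)"
    unfolding tensor_def pI_def by simp
  also have "\<dots> = (if x = y then 1 else 0)" by (simp add: prod_if0 fun_eq_iff)
  finally show "tensor (\<lambda>_. pI) x y = (if x = y then 1 else 0)" .
qed

lemma apply_op_id: "apply_op (tensor (\<lambda>_. pI)) \<psi> = (\<psi>::('n::finite\<Rightarrow>bool) \<Rightarrow> complex)"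
proof (intro ext)
  fix x :: "'n \<Rightarrow> bool"
  have "(\<Sum>y\<in>UNIV. (if x = y then 1 else 0) * \<psi> y) = (\<Sum>y\<in>UNIV. (if y = x then 1 else 0) * \<psi> y)"
    by (rule sum.cong) auto
  then show "apply_op (tensor (\<lambda>_. pI)) \<psi> x = \<psi> x"
    unfolding tensor_id apply_op_def by (simp add: sum_delta1)
qed

lemma powX: "apply_op (pow_gate pX a) \<psi> = (\<lambda>x. \<psi> (vadd x (a::'n::finite\<Rightarrow>bool)))"
proof (intro ext)
  fix x :: "'n \<Rightarrow> bool"
  have t: "pow_gate pX a x y = (if y = vadd x a then 1 else 0)" for y
  proof -
    have "pow_gate pX a x y = (\<Prod>i\<in>UNIV. if y i = (x i \<noteq> a i) then 1 else 0)"
      unfolding pow_gate_def tensor_def by (intro prod.cong) (auto simp: pX_def pI_def)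
    also have "\<dots> = (if y = vadd x a then 1 else 0)" by (simp add: prod_if0 fun_eq_iff vadd_def)
    finally show ?thesis .
  qed
  show "apply_op (pow_gate pX a) \<psi> x = \<psi> (vadd x a)"
    unfolding apply_op_def t by (simp add: sum_delta1)
qed

lemma powZ: "apply_op (pow_gate pZ b) \<psi> = (\<lambda>x. chi b x * \<psi> (x::'n::finite\<Rightarrow>bool))"
proof (intro ext)
  fix x :: "'n \<Rightarrow> bool"
  have t: "pow_gate pZ b x y = (if x = y then chi b x else 0)" for y
  proof -
    have "pow_gate pZ b x y = (\<Prod>i\<in>UNIV. if x i = y i then (if b i \<and> x i then -1 else 1) else 0)"
      unfolding pow_gate_def tensor_def by (intro prod.cong) (auto simp: pZ_def pI_def)
    also have "\<dots> = (if x = y then chi b x else 0)" by (simp add: prod_if0 fun_eq_iff chi_def)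
    finally show ?thesis .
  qed
  show "apply_op (pow_gate pZ b) \<psi> x = chi b x * \<psi> x"
    unfolding apply_op_def t by (simp add: eq_commute[of x] sum_delta1)
qed

lemma tensor_wgate: "tensor (\<lambda>i. wgate (x i) (z i)) = opmult (pow_gate pX x) (pow_gate pZ z)"
  unfolding pow_gate_def tensor_mult wgate_def by simp



lemma vadd_simps[simp]: "vadd x x = (\<lambda>_. False)" "vadd (vadd x y) y = x" "vadd x (\<lambda>_. False) = x"
  "vadd (\<lambda>_. False) x = x"
  by (auto simp: vadd_def fun_eq_iff)
lemma vadd_comm: "vadd x y = vadd y x" by (auto simp: vadd_def fun_eq_iff)
lemma vadd_assoc: "vadd (vadd x y) z = vadd x (vadd y z)" by (auto simp: vadd_def fun_eq_iff)

lemma chi_pow: "chi u w = (-1) ^ card {i. u i \<and> w i}"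
proof -
  have "chi u w = (\<Prod>i\<in>UNIV \<inter> {i. u i \<and> w i}. -1) * (\<Prod>i\<in>UNIV \<inter> - {i. u i \<and> w i}. 1)"
    unfolding chi_def by (rule prod.If_cases) simp
  then show ?thesis by simp
qed

lemma chi_sym: "chi u w = chi w u"
  unfolding chi_def by (intro prod.cong) auto

lemma chi_vadd: "chi (vadd x y) b = chi x b * chi y b"
  unfolding chi_def vadd_def by (simp add: prod.distrib[symmetric]) (intro prod.cong, auto)

lemma chi_vadd2: "chi b (vadd x y) = chi b x * chi b y"
  using chi_vadd chi_sym by metis

lemma chi_pm: "chi u w = 1 \<or> chi u w = -1"
  unfolding chi_pow by (cases "even (card {i. u i \<and> w i})") auto

lemma chi_one_iff: "chi u w = 1 \<longleftrightarrow> even (card {i. u i \<and> w i})"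
proof -
  have "(-1::complex) \<noteq> 1" by (simp add: complex_eq_iff)
  then show ?thesis unfolding chi_pow by (cases "even (card {i. u i \<and> w i})") auto
qed

lemma chi_zero[simp]: "chi (\<lambda>_. False) w = 1" "chi w (\<lambda>_. False) = 1"
  unfolding chi_def by simp_all

lemma dual_chi: "b \<in> dual_code A \<longleftrightarrow> (\<forall>a\<in>A. chi a b = 1)"
  unfolding dual_code_def chi_one_iff by simp

lemma lin_dual: "lin_code (dual_code A)"
proof -
  have "vadd a b \<in> dual_code A" if "a \<in> dual_code A" "b \<in> dual_code A" for a b
    using that by (simp add: dual_chi chi_vadd2)
  then show ?thesis unfolding lin_code_def vadd_def by (simp add: dual_chi)
qed

lemma lin_vadd: "lin_code A \<Longrightarrow> a \<in> A \<Longrightarrow> b \<in> A \<Longrightarrow> vadd a b \<in> A"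
  unfolding lin_code_def vadd_def by blast
lemma lin_zero: "lin_code A \<Longrightarrow> (\<lambda>_. False) \<in> A"
  unfolding lin_code_def by blast

lemma sum_flip:
  fixes f :: "'a \<Rightarrow> complex"
  assumes "\<And>s. s \<in> S \<Longrightarrow> \<tau> s \<in> S" "\<And>s. s \<in> S \<Longrightarrow> \<tau> (\<tau> s) = s"
    "\<And>s. s \<in> S \<Longrightarrow> f (\<tau> s) = - f s"
  shows "sum f S = 0"
proof -
  have "sum (\<lambda>s. f (\<tau> s)) S = sum f S"
    by (rule sum.reindex_bij_witness[of S \<tau> \<tau>]) (use assms in auto)
  then have "sum (\<lambda>s. - f s) S = sum f S" using assms(3) by (metis (no_types, lifting) sum.cong)
  then show ?thesis by (simp add: sum_negf)
qed

lemma char_sum_B: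
  assumes "lin_code B"
  shows "(\<Sum>b\<in>B. chi x b) = (if x \<in> dual_code B then of_nat (card B) else 0)"
proof (cases "x \<in> dual_code B")
  case True
  then have "(\<Sum>b\<in>B. chi x b) = (\<Sum>b\<in>B. 1)" unfolding dual_chi by (intro sum.cong) (auto simp: chi_sym)
  then show ?thesis using True by simp
next
  case False
  then obtain b0 where b0: "b0 \<in> B" "chi b0 x \<noteq> 1" unfolding dual_chi by blast
  then have "chi x b0 = -1" using chi_pm chi_sym by metis
  have "sum (chi x) B = 0"
    by (rule sum_flip[of B "\<lambda>b. vadd b b0"])
       (use assms b0 \<open>chi x b0 = -1\<close> in \<open>auto simp: lin_vadd chi_vadd2\<close>)
  then show ?thesis using False by simp
qed

lemma char_sum_U:
  "(\<Sum>x\<in>(UNIV::('n::finite \<Rightarrow> bool) set). chi x b) = (if b = (\<lambda>_. False) then of_nat (card (UNIV::('n \<Rightarrow> bool) set)) else 0)"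
proof (cases "b = (\<lambda>_. False)")
  case True then show ?thesis by simp
next
  case False
  then obtain j where j: "b j" by auto
  define e where "e = (\<lambda>i. i = j)"
  have "chi e b = (\<Prod>i\<in>UNIV. if i = j then (if b i then -1 else 1) else 1)"
    unfolding chi_def e_def by (intro prod.cong) auto
  also have "\<dots> = -1" using j by simp
  finally have ce: "chi e b = -1" .
  have "sum (\<lambda>x. chi x b) (UNIV::('n \<Rightarrow> bool) set) = 0"
    by (rule sum_flip[of UNIV "\<lambda>x. vadd x e"]) (auto simp: chi_vadd ce)
  then show ?thesis using False by simp
qed

lemma card_dual:
  assumes "lin_code (B::('n::finite \<Rightarrow> bool) set)"
  shows "card B * card (dual_code B) = card (UNIV::('n \<Rightarrow> bool) set)"
proof -
  have "(\<Sum>x\<in>UNIV. \<Sum>b\<in>B. chi x b) = (\<Sum>b\<in>B. \<Sum>x\<in>UNIV. chi x b)" by (rule sum.swap)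
  also have "\<dots> = (\<Sum>b\<in>B. if b = (\<lambda>_. False) then of_nat (card (UNIV::('n \<Rightarrow> bool) set)) else 0)"
    by (simp add: char_sum_U)
  also have "\<dots> = of_nat (card (UNIV::('n \<Rightarrow> bool) set))"
    using lin_zero[OF assms] by (simp add: sum.delta')
  finally have 1: "(\<Sum>x\<in>UNIV. \<Sum>b\<in>B. chi x b) = (of_nat (card (UNIV::('n \<Rightarrow> bool) set)) :: complex)" .
  have "(\<Sum>x\<in>UNIV. \<Sum>b\<in>B. chi x b) = (\<Sum>x\<in>UNIV. if x \<in> dual_code B then of_nat (card B) else (0::complex))"
    by (simp add: char_sum_B[OF assms])
  also have "\<dots> = of_nat (card (dual_code B)) * of_nat (card B)"
    by (simp add: sum.If_cases)
  finally have "(of_nat (card B * card (dual_code B)) :: complex) = of_nat (card (UNIV::('n \<Rightarrow> bool) set))"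
    using 1 by (simp add: mult.commute)
  then show ?thesis by (simp only: of_nat_eq_iff)
qed

lemma double_dual:
  assumes "lin_code (B::('n::finite \<Rightarrow> bool) set)"
  shows "dual_code (dual_code B) = B"
proof -
  have sub: "B \<subseteq> dual_code (dual_code B)" by (auto simp: dual_chi) (metis chi_sym)
  have c1: "card B * card (dual_code B) = card (UNIV::('n \<Rightarrow> bool) set)" by (rule card_dual[OF assms])
  have c2: "card (dual_code B) * card (dual_code (dual_code B)) = card (UNIV::('n \<Rightarrow> bool) set)"
    by (rule card_dual[OF lin_dual])
  have "card (dual_code B) > 0"
    using lin_zero[OF lin_dual[of B]] by (auto simp: card_gt_0_iff)
  then have "card B = card (dual_code (dual_code B))" using c1 c2 by (metis mult.commute mult_left_cancel neq0_conv)
  then show ?thesis using card_subset_eq[OF _ sub] by simp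
qed



lemma code_char: "\<psi> \<in> css_codespace A B \<longleftrightarrow>
   (\<forall>a\<in>A. \<forall>x. \<psi> (vadd x a) = \<psi> x) \<and> (\<forall>b\<in>B. \<forall>x. chi b x * \<psi> x = \<psi> x)"
  unfolding css_codespace_def powX powZ by (simp add: fun_eq_iff)

lemma code_scale: "\<psi> \<in> css_codespace A B \<Longrightarrow> (\<lambda>x. s * \<psi> x) \<in> css_codespace A B"
  unfolding code_char by (simp add: algebra_simps)

definition tstate :: "('n::finite \<Rightarrow> bool) set \<Rightarrow> ('n \<Rightarrow> bool) \<Rightarrow> 'n qstate" where
  "tstate A y = (\<lambda>x. if \<exists>a\<in>A. x = vadd y a then 1 else 0)"

lemma tstate_in:
  assumes A: "lin_code A" and BA: "B \<subseteq> dual_code A" and y: "y \<in> dual_code B"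
  shows "tstate A y \<in> css_codespace A B"
  unfolding code_char
proof (intro conjI ballI allI)
  fix a x assume a: "a \<in> A"
  have "(\<exists>a'\<in>A. vadd x a = vadd y a') \<longleftrightarrow> (\<exists>a'\<in>A. x = vadd y a')"
  proof
    assume "\<exists>a'\<in>A. vadd x a = vadd y a'"
    then obtain a' where "a' \<in> A" "vadd x a = vadd y a'" by blast
    then have "x = vadd y (vadd a' a)" by (metis vadd_assoc vadd_simps(2))
    then show "\<exists>a'\<in>A. x = vadd y a'" using lin_vadd[OF A \<open>a' \<in> A\<close> a] by blast
  next
    assume "\<exists>a'\<in>A. x = vadd y a'"
    then obtain a' where "a' \<in> A" "x = vadd y a'" by blast
    then have "vadd x a = vadd y (vadd a' a)" by (simp add: vadd_assoc)
    then show "\<exists>a'\<in>A. vadd x a = vadd y a'" using lin_vadd[OF A \<open>a' \<in> A\<close> a] by blast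
  qed
  then show "tstate A y (vadd x a) = tstate A y x" unfolding tstate_def by simp
next
  fix b x assume b: "b \<in> B"
  show "chi b x * tstate A y x = tstate A y x"
  proof (cases "\<exists>a\<in>A. x = vadd y a")
    case True
    then obtain a where a: "a \<in> A" "x = vadd y a" by blast
    have "chi b y = 1" using y b by (simp add: dual_chi)
    moreover have "chi a b = 1" using BA b a(1) by (auto simp: dual_chi)
    ultimately have "chi b x = 1" using a(2) by (simp add: chi_vadd2 chi_sym)
    then show ?thesis by simp
  next
    case False
    then show ?thesis unfolding tstate_def by simp
  qed
qed

lemma key:
  assumes A: "lin_code A" and B: "lin_code B" and BA: "B \<subseteq> dual_code A"
    and H: "\<And>\<phi> x. \<phi> \<in> css_codespace A B \<Longrightarrow> \<phi> x = K * (chi z (vadd x xx) * \<phi> (vadd x xx))"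
  shows "xx \<in> A \<and> z \<in> B"
proof -
  have main: "xx \<in> A \<and> K * chi z (vadd y xx) = 1" if y: "y \<in> dual_code B" for y
  proof -
    have "tstate A y y = 1" unfolding tstate_def using lin_zero[OF A] by (metis vadd_simps(3))
    then have e: "1 = K * (chi z (vadd y xx) * tstate A y (vadd y xx))"
      using H[OF tstate_in[OF A BA y], of y] by simp
    then have "tstate A y (vadd y xx) \<noteq> 0" by auto
    then obtain a where a: "a \<in> A" "vadd y xx = vadd y a" unfolding tstate_def by (auto split: if_splits)
    then have "xx = a" by (metis vadd_assoc vadd_comm vadd_simps(2))
    with a have "xx \<in> A" by simp
    moreover have "tstate A y (vadd y xx) = 1" unfolding tstate_def using a by auto
    ultimately show ?thesis using e by simp
  qed
  have z0: "(\<lambda>_. False) \<in> dual_code B" using lin_zero[OF lin_dual] by blast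
  from main[OF z0] have xA: "xx \<in> A" and k0: "K * chi z xx = 1" by auto
  have "chi y z = 1" if y: "y \<in> dual_code B" for y
  proof -
    have "1 = K * chi z (vadd y xx)" using main[OF y] by simp
    also have "\<dots> = chi z y * (K * chi z xx)" by (simp add: chi_vadd2)
    finally show ?thesis using k0 by (simp add: chi_sym)
  qed
  then have "z \<in> dual_code (dual_code B)" by (simp add: dual_chi)
  then show ?thesis using double_dual[OF B] xA by simp
qed

lemma surj_code:
  fixes g :: "'n::finite \<Rightarrow> gate1"
  assumes gi: "\<And>i. g i = gscale (c i) (gmult (gate_mat (v i)) (q i))" and c: "\<And>i. c i \<noteq> 0"
    and q: "\<And>i. q i \<in> paulis"
    and pres: "\<And>\<psi>. \<psi> \<in> css_codespace A B \<Longrightarrow> apply_op (tensor g) \<psi> \<in> css_codespace A B"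
    and phi: "\<phi> \<in> css_codespace A B"
  shows "\<exists>\<psi>\<in>css_codespace A B. \<phi> = apply_op (tensor g) \<psi>"
proof -
  define T where "T n = tensor (\<lambda>i. gpow (g i) n)" for n
  have TS: "apply_op (T (Suc n)) \<psi> = apply_op (tensor g) (apply_op (T n) \<psi>)" for n \<psi>
    unfolding T_def by (simp add: apply_op_mult[symmetric] tensor_mult)
  have Tin: "apply_op (T n) \<psi> \<in> css_codespace A B" if "\<psi> \<in> css_codespace A B" for n \<psi>
  proof (induction n)
    case 0
    then show ?case using that by (simp add: T_def apply_op_id)
  next
    case (Suc n)
    then show ?case unfolding TS by (rule pres)
  qed
  have "\<forall>i. \<exists>s. s \<noteq> 0 \<and> gpow (g i) 12 = gscale s pI"
    using order12[OF c q] gi by metis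
  then obtain s where s: "\<And>i. s i \<noteq> 0" "\<And>i. gpow (g i) 12 = gscale (s i) pI" by metis
  define S where "S = (\<Prod>i\<in>UNIV. s i)"
  have S0: "S \<noteq> 0" unfolding S_def using s(1) by simp
  have T12: "apply_op (T 12) \<phi> = (\<lambda>x. S * \<phi> x)"
    unfolding T_def s(2) tensor_scale apply_op_scale apply_op_id S_def by simp
  define \<psi> where "\<psi> = (\<lambda>x. (1/S) * apply_op (T 11) \<phi> x)"
  have "\<psi> \<in> css_codespace A B" unfolding \<psi>_def by (intro code_scale Tin phi)
  moreover have "apply_op (tensor g) \<psi> = \<phi>"
  proof -
    have "apply_op (tensor g) \<psi> = (\<lambda>x. (1/S) * apply_op (tensor g) (apply_op (T 11) \<phi>) x)"
      unfolding \<psi>_def apply_op_def by (simp add: sum_distrib_left algebra_simps)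
    also have "\<dots> = (\<lambda>x. (1/S) * apply_op (T 12) \<phi> x)"
      using TS[of 11 \<phi>] by (simp add: numeral_eq_Suc)
    also have "\<dots> = \<phi>" unfolding T12 using S0 by simp
    finally show ?thesis .
  qed
  ultimately show ?thesis by metis
qed

lemma comm_tensor:
  fixes g m :: "'n::finite \<Rightarrow> gate1"
  assumes "\<And>i. gmult (g i) (m i) = gscale (k i) (gmult (wgate (xv i) (zv i)) (g i))"
  shows "apply_op (tensor g) (apply_op (tensor m) \<psi>) =
    (\<lambda>x. (\<Prod>i\<in>UNIV. k i) * apply_op (pow_gate pX xv) (apply_op (pow_gate pZ zv) (apply_op (tensor g) \<psi>)) x)"
proof -
  have "apply_op (tensor g) (apply_op (tensor m) \<psi>) = apply_op (tensor (\<lambda>i. gscale (k i) (gmult (wgate (xv i) (zv i)) (g i)))) \<psi>"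
    by (simp add: apply_op_mult[symmetric] tensor_mult assms)
  also have "\<dots> = (\<lambda>x. (\<Prod>i\<in>UNIV. k i) * apply_op (opmult (tensor (\<lambda>i. wgate (xv i) (zv i))) (tensor g)) \<psi> x)"
    unfolding tensor_scale apply_op_scale tensor_mult by simp
  also have "\<dots> = (\<lambda>x. (\<Prod>i\<in>UNIV. k i) * apply_op (pow_gate pX xv) (apply_op (pow_gate pZ zv) (apply_op (tensor g) \<psi>)) x)"
    unfolding tensor_wgate apply_op_mult ..
  finally show ?thesis .
qed



lemma stab_cond:
  fixes g m :: "'n::finite \<Rightarrow> gate1"
  assumes A: "lin_code A" and B: "lin_code B" and BA: "B \<subseteq> dual_code A"
    and comm: "\<And>i. gmult (g i) (m i) = gscale (k i) (gmult (wgate (xv i) (zv i)) (g i))"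
    and fixm: "\<And>\<psi>. \<psi> \<in> css_codespace A B \<Longrightarrow> apply_op (tensor m) \<psi> = \<psi>"
    and surj: "\<And>\<phi>. \<phi> \<in> css_codespace A B \<Longrightarrow> \<exists>\<psi>\<in>css_codespace A B. \<phi> = apply_op (tensor g) \<psi>"
  shows "xv \<in> A \<and> zv \<in> B"
proof (rule key[OF A B BA])
  fix \<phi> x assume \<phi>: "\<phi> \<in> css_codespace A B"
  obtain \<psi> where \<psi>: "\<psi> \<in> css_codespace A B" "\<phi> = apply_op (tensor g) \<psi>" using surj[OF \<phi>] by blast
  have "\<phi> = apply_op (tensor g) (apply_op (tensor m) \<psi>)" using \<psi> fixm by simp
  also have "\<dots> = (\<lambda>x. (\<Prod>i\<in>UNIV. k i) * apply_op (pow_gate pX xv) (apply_op (pow_gate pZ zv) \<phi>) x)"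
    unfolding comm_tensor[of g m k xv zv, OF comm] \<psi>(2) ..
  finally show "\<phi> x = (\<Prod>i\<in>UNIV. k i) * (chi zv (vadd x xv) * \<phi> (vadd x xv))"
    by (metis powX powZ)
qed

lemma gate_part1: "w \<in> {GPH, GH} \<longleftrightarrow> w \<notin> {GI, GP, GHP, GPHP}" by (cases w) auto
lemma gate_part2: "w \<in> {GHP, GH} \<longleftrightarrow> w \<notin> {GI, GP, GPH, GPHP}" by (cases w) auto

theorem proposition6:
  fixes A B :: "('n::finite \<Rightarrow> bool) set" and U :: "'n qop"
  assumes "lin_code A" and "lin_code B" and "B \<subseteq> dual_code A"
    and "one_local_clifford U"
    and "logical_op (css_codespace A B) U"
  shows "\<exists>(V :: 'n \<Rightarrow> gate) Q c. pauli_circuit Q \<and> cmod c = 1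
           \<and> U = (\<lambda>x y. c * opmult (gate_circuit V) Q x y)
           \<and> (\<forall>a\<in>A. cap a (Vset V {GP, GHP, GPH, GH}) \<in> B
                    \<and> cap a (Vset V {GPH, GH}) \<in> A)
           \<and> (\<forall>b\<in>B. cap b (Vset V {GHP, GPHP, GPH, GH}) \<in> A
                    \<and> cap b (Vset V {GHP, GH}) \<in> B)"
proof -
  note A = assms(1) and B = assms(2) and BA = assms(3)
  obtain g where cl: "\<And>i. clifford1 (g i)" and U: "U = tensor g"
    using assms(4) unfolding one_local_clifford_def by blast
  have "\<forall>i. \<exists>v q c. q \<in> paulis \<and> cmod c = 1 \<and> g i = gscale c (gmult (gate_mat v) q)"
    using classify[OF cl] by blast
  then obtain v where "\<forall>i. \<exists>q c. q \<in> paulis \<and> cmod c = 1 \<and> g i = gscale c (gmult (gate_mat (v i)) q)"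
    by (subst (asm) choice_iff) blast
  then obtain q where "\<forall>i. \<exists>c. q i \<in> paulis \<and> cmod c = 1 \<and> g i = gscale c (gmult (gate_mat (v i)) (q i))"
    by (subst (asm) choice_iff) blast
  then obtain c where "\<forall>i. q i \<in> paulis \<and> cmod (c i) = 1 \<and> g i = gscale (c i) (gmult (gate_mat (v i)) (q i))"
    by (subst (asm) choice_iff) blast
  then have q: "\<And>i. q i \<in> paulis" and c: "\<And>i. cmod (c i) = 1"
    and gi: "\<And>i. g i = gscale (c i) (gmult (gate_mat (v i)) (q i))" by auto
  have c0: "c i \<noteq> 0" for i using c[of i] by auto
  have pres: "\<And>\<psi>. \<psi> \<in> css_codespace A B \<Longrightarrow> apply_op (tensor g) \<psi> \<in> css_codespace A B"
    using assms(5) unfolding logical_op_def U by blast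
  have surj: "\<And>\<phi>. \<phi> \<in> css_codespace A B \<Longrightarrow> \<exists>\<psi>\<in>css_codespace A B. \<phi> = apply_op (tensor g) \<psi>"
    by (rule surj_code[OF gi c0 q pres])
  have Xc: "cap a (Vset v {GP, GHP, GPH, GH}) \<in> B \<and> cap a (Vset v {GPH, GH}) \<in> A" if a: "a \<in> A" for a
  proof -
    have "\<forall>i. \<exists>k. gmult (g i) (if a i then pX else pI) = gscale k (gmult (wgate (a i \<and> xp (v i)) (a i \<and> zp (v i))) (g i))"
      by (intro allI) (rule qubitX[OF gi q])
    then obtain k where k: "\<And>i. gmult (g i) (if a i then pX else pI) = gscale (k i) (gmult (wgate (a i \<and> xp (v i)) (a i \<and> zp (v i))) (g i))"
      by (subst (asm) choice_iff) blast
    have fixm: "apply_op (tensor (\<lambda>i. if a i then pX else pI)) \<psi> = \<psi>" if "\<psi> \<in> css_codespace A B" for \<psi>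
      using that a unfolding css_codespace_def pow_gate_def by blast
    have r: "(\<lambda>i. a i \<and> xp (v i)) \<in> A \<and> (\<lambda>i. a i \<and> zp (v i)) \<in> B"
      by (rule stab_cond[OF A B BA k fixm surj])
    have e1: "cap a (Vset v {GP, GHP, GPH, GH}) = (\<lambda>i. a i \<and> zp (v i))"
      unfolding cap_def Vset_def zp_def by simp
    have e2: "cap a (Vset v {GPH, GH}) = vadd a (\<lambda>i. a i \<and> xp (v i))"
      unfolding cap_def Vset_def xp_def vadd_def
    proof (intro ext)
      fix i show "(a i \<and> i \<in> {i. v i \<in> {GPH, GH}}) = (a i \<noteq> (a i \<and> v i \<in> {GI, GP, GHP, GPHP}))"
        by (cases "v i") simp_all
    qed
    show ?thesis using r e1 e2 lin_vadd[OF A a] by simp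
  qed
  have Zc: "cap b (Vset v {GHP, GPHP, GPH, GH}) \<in> A \<and> cap b (Vset v {GHP, GH}) \<in> B" if b: "b \<in> B" for b
  proof -
    have "\<forall>i. \<exists>k. gmult (g i) (if b i then pZ else pI) = gscale k (gmult (wgate (b i \<and> xz (v i)) (b i \<and> zz (v i))) (g i))"
      by (intro allI) (rule qubitZ[OF gi q])
    then obtain k where k: "\<And>i. gmult (g i) (if b i then pZ else pI) = gscale (k i) (gmult (wgate (b i \<and> xz (v i)) (b i \<and> zz (v i))) (g i))"
      by (subst (asm) choice_iff) blast
    have fixm: "apply_op (tensor (\<lambda>i. if b i then pZ else pI)) \<psi> = \<psi>" if "\<psi> \<in> css_codespace A B" for \<psi>
      using that b unfolding css_codespace_def pow_gate_def by blast
    have r: "(\<lambda>i. b i \<and> xz (v i)) \<in> A \<and> (\<lambda>i. b i \<and> zz (v i)) \<in> B"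
      by (rule stab_cond[OF A B BA k fixm surj])
    have e1: "cap b (Vset v {GHP, GPHP, GPH, GH}) = (\<lambda>i. b i \<and> xz (v i))"
      unfolding cap_def Vset_def xz_def by simp
    have e2: "cap b (Vset v {GHP, GH}) = vadd b (\<lambda>i. b i \<and> zz (v i))"
      unfolding cap_def Vset_def zz_def vadd_def
    proof (intro ext)
      fix i show "(b i \<and> i \<in> {i. v i \<in> {GHP, GH}}) = (b i \<noteq> (b i \<and> v i \<in> {GI, GP, GPH, GPHP}))"
        by (cases "v i") simp_all
    qed
    show ?thesis using r e1 e2 lin_vadd[OF B b] by simp
  qed
  have Ueq: "U = (\<lambda>x y. (\<Prod>i\<in>UNIV. c i) * opmult (gate_circuit v) (tensor q) x y)"
  proof -
    have gfun: "g = (\<lambda>i. gscale (c i) (gmult (gate_mat (v i)) (q i)))" using gi by (rule ext)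
    show ?thesis unfolding U gate_circuit_def tensor_mult gfun tensor_scale ..
  qed
  have "\<forall>i. q i \<in> {pI, pX, pY, pZ}" using q unfolding paulis_def by blast
  then have pc: "pauli_circuit (tensor q)" unfolding pauli_circuit_def by blast
  have cm: "cmod (\<Prod>i\<in>UNIV. c i) = 1" by (simp add: prod_norm[symmetric] c)
  show ?thesis
    apply (rule exI[of _ v], rule exI[of _ "tensor q"], rule exI[of _ "\<Prod>i\<in>UNIV. c i"])
    using Xc Zc by (intro conjI pc cm Ueq ballI) auto
qed


end
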